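(* Let $N\ge 1$, $a\in\mathbb{R}^N$ with all $a_i\neq 0$, $\underline x<\overline x$, $\underline y<\overline y$ in $\mathbb{R}^N$, and $\mathcal{S}_a=\{(x,y)\in\mathbb{R}^N\times\mathbb{R}^N: \sum_{i=1}^N a_ix_iy_i=0,\ \underline x\le x\le\overline x,\ \underline y\le y\le\overline y\}$. Then every extreme point $(x,y)$ of $\mathcal{S}_a$ belongs to one of the sets $D_0,D_1,\dots,D_N$, where $D_0=\{(x,y)\in\mathcal{S}_a:\ x_i\in\{\underline x_i,\overline x_i\},\ y_i\in\{\underline y_i,\overline y_i\}\ \forall i\}$ and, for $k=1,\dots,N$, $D_k=\{(x,y)\in\mathcal{S}_a:\ x_i\in\{\underline x_i,\overline x_i\},\ y_i\in\{\underline y_i,\overline y_i\}\ \forall i\neq k,\ x_ky_k=-\tfrac{1}{a_k}\sum_{i\neq k}a_ix_iy_i\}$. Equivalently, there is at most one index $k$ such that $(x_k,y_k)$ is not a vertex of $[\underline x_k,\overline x_k]\times[\underline y_k,\overline y_k]$. *)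

theory Defs
  imports "HOL-Analysis.Analysis"
begin

definition S_a :: "(real^'n) \<Rightarrow> (real^'n) \<Rightarrow> (real^'n) \<Rightarrow> (real^'n) \<Rightarrow> (real^'n)
                   \<Rightarrow> ((real^'n) \<times> (real^'n)) set" where
  "S_a a xl xu yl yu = {(x, y). (\<Sum>i\<in>UNIV. a$i * x$i * y$i) = 0 \<and>
      (\<forall>i. xl$i \<le> x$i \<and> x$i \<le> xu$i) \<and> (\<forall>i. yl$i \<le> y$i \<and> y$i \<le> yu$i)}"

definition D0 :: "(real^'n) \<Rightarrow> (real^'n) \<Rightarrow> (real^'n) \<Rightarrow> (real^'n) \<Rightarrow> (real^'n)
                   \<Rightarrow> ((real^'n) \<times> (real^'n)) set" where
  "D0 a xl xu yl yu = {(x, y) \<in> S_a a xl xu yl yu.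
      \<forall>i. x$i \<in> {xl$i, xu$i} \<and> y$i \<in> {yl$i, yu$i}}"

definition Dk :: "(real^'n) \<Rightarrow> (real^'n) \<Rightarrow> (real^'n) \<Rightarrow> (real^'n) \<Rightarrow> (real^'n) \<Rightarrow> 'n
                   \<Rightarrow> ((real^'n) \<times> (real^'n)) set" where
  "Dk a xl xu yl yu k = {(x, y) \<in> S_a a xl xu yl yu.
      (\<forall>i. i \<noteq> k \<longrightarrow> x$i \<in> {xl$i, xu$i} \<and> y$i \<in> {yl$i, yu$i}) \<and>
      x$k * y$k = - (1 / a$k) * (\<Sum>i\<in>UNIV - {k}. a$i * x$i * y$i)}"

end

theory Submission
  imports Defs
begin

lemma idx_dir:
  fixes xl xv xu yl yv yu :: real
  assumes "xl \<le> xv" "xv \<le> xu" "yl \<le> yv" "yv \<le> yu"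
    and "\<not> (xv \<in> {xl, xu} \<and> yv \<in> {yl, yu})"
  shows "\<exists>p q e. p * q = 0 \<and> (p \<noteq> 0 \<or> q \<noteq> 0) \<and> e > 0 \<and> \<bar>p\<bar> \<le> 1 \<and> \<bar>q\<bar> \<le> 1 \<and>
     (\<forall>d. \<bar>d\<bar> \<le> e \<longrightarrow> xl \<le> xv + d * p \<and> xv + d * p \<le> xu \<and> yl \<le> yv + d * q \<and> yv + d * q \<le> yu)"
proof (cases "xv \<in> {xl, xu}")
  case False
  then have "xl < xv" "xv < xu" using assms by auto
  then show ?thesis
    by (intro exI[of _ 1] exI[of _ 0] exI[of _ "min (xv - xl) (xu - xv)"]) (auto simp: assms abs_le_iff)
next
  case True
  then have "yl < yv" "yv < yu" using assms by auto
  then show ?thesis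
    by (intro exI[of _ 0] exI[of _ 1] exI[of _ "min (yv - yl) (yu - yv)"]) (auto simp: assms abs_le_iff)
qed

lemma two_nonvertex_false:
  fixes a xl xu yl yu x y :: "real^'n"
  assumes ext: "(x, y) extreme_point_of (S_a a xl xu yl yu)"
    and jk: "j \<noteq> k"
    and nj: "\<not> (x$j \<in> {xl$j, xu$j} \<and> y$j \<in> {yl$j, yu$j})"
    and nk: "\<not> (x$k \<in> {xl$k, xu$k} \<and> y$k \<in> {yl$k, yu$k})"
  shows False
proof -
  have inS: "(x, y) \<in> S_a a xl xu yl yu" using ext by (simp add: extreme_point_of_def)
  hence sum0: "(\<Sum>i\<in>UNIV. a$i * x$i * y$i) = 0"
    and bx: "\<forall>i. xl$i \<le> x$i \<and> x$i \<le> xu$i" and bY: "\<forall>i. yl$i \<le> y$i \<and> y$i \<le> yu$i"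
    by (auto simp: S_a_def)
  obtain pj qj ej where Pj: "pj * qj = 0" "pj \<noteq> 0 \<or> qj \<noteq> 0" "ej > 0" "\<bar>pj\<bar> \<le> 1" "\<bar>qj\<bar> \<le> 1"
    "\<forall>d. \<bar>d\<bar> \<le> ej \<longrightarrow> xl$j \<le> x$j + d * pj \<and> x$j + d * pj \<le> xu$j \<and> yl$j \<le> y$j + d * qj \<and> y$j + d * qj \<le> yu$j"
    using idx_dir[of "xl$j" "x$j" "xu$j" "yl$j" "y$j" "yu$j"] bx bY nj by blast
  obtain pk qk ek where Pk: "pk * qk = 0" "pk \<noteq> 0 \<or> qk \<noteq> 0" "ek > 0" "\<bar>pk\<bar> \<le> 1" "\<bar>qk\<bar> \<le> 1"
    "\<forall>d. \<bar>d\<bar> \<le> ek \<longrightarrow> xl$k \<le> x$k + d * pk \<and> x$k + d * pk \<le> xu$k \<and> yl$k \<le> y$k + d * qk \<and> y$k + d * qk \<le> yu$k"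
    using idx_dir[of "xl$k" "x$k" "xu$k" "yl$k" "y$k" "yu$k"] bx bY nk by blast
  define cj where "cj = a$j * (pj * y$j + qj * x$j)"
  define ck where "ck = a$k * (pk * y$k + qk * x$k)"
  define M where "M = 1 + \<bar>cj\<bar> + \<bar>ck\<bar>"
  have M: "M > 0" "\<bar>cj\<bar> \<le> M" "\<bar>ck\<bar> \<le> M" unfolding M_def by auto
  obtain s t where st: "s * cj + t * ck = 0" "s \<noteq> 0 \<or> t \<noteq> 0" "\<bar>s\<bar> \<le> 1" "\<bar>t\<bar> \<le> 1"
  proof (cases "cj = 0 \<and> ck = 0")
    case True
    then show ?thesis using that[of 1 0] by auto
  next
    case False
    have "\<bar>ck / M\<bar> \<le> 1" "\<bar>cj / M\<bar> \<le> 1" using M by (auto simp: abs_divide divide_le_eq_1)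
    moreover have "(ck / M) * cj + (- cj / M) * ck = 0" by (simp add: field_simps)
    moreover have "ck / M \<noteq> 0 \<or> - cj / M \<noteq> 0" using False M by auto
    ultimately show ?thesis using that[of "ck / M" "- cj / M"] by auto
  qed
  define dx :: "real^'n" where "dx = (\<chi> i. if i = j then s * pj else if i = k then t * pk else 0)"
  define dy :: "real^'n" where "dy = (\<chi> i. if i = j then s * qj else if i = k then t * qk else 0)"
  define e where "e = min ej ek"
  have e: "e > 0" "e \<le> ej" "e \<le> ek" using Pj Pk by (auto simp: e_def)
  have mem: "(x + d *\<^sub>R dx, y + d *\<^sub>R dy) \<in> S_a a xl xu yl yu" if d: "\<bar>d\<bar> \<le> e" for d
  proof -
    have dsj: "\<bar>d * s\<bar> \<le> ej" using d st e
      by (metis abs_mult dual_order.trans mult_left_le mult_nonneg_nonneg abs_ge_zero) 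
    have dtk: "\<bar>d * t\<bar> \<le> ek" using d st e
      by (metis abs_mult dual_order.trans mult_left_le abs_ge_zero)
    have pt: "a$i * (x + d *\<^sub>R dx)$i * (y + d *\<^sub>R dy)$i
        = a$i * x$i * y$i + d * ((if i = j then s * cj else 0) + (if i = k then t * ck else 0))" for i
    proof -
      have "(x + d *\<^sub>R dx)$i = x$i + d * dx$i" "(y + d *\<^sub>R dy)$i = y$i + d * dy$i" by auto
      moreover have "dx$i * dy$i = 0" using Pj(1) Pk(1) unfolding dx_def dy_def
        by (auto simp: algebra_simps)
      moreover have "a$i * (dx$i * y$i + dy$i * x$i) = (if i = j then s * cj else 0) + (if i = k then t * ck else 0)"
        using jk unfolding dx_def dy_def cj_def ck_def by (auto simp: algebra_simps)
      ultimately show ?thesis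
        by (smt (verit, ccfv_threshold) distrib_left mult.assoc mult.commute mult_zero_right)
    qed
    have "(\<Sum>i\<in>UNIV. a$i * (x + d *\<^sub>R dx)$i * (y + d *\<^sub>R dy)$i)
        = (\<Sum>i\<in>UNIV. a$i * x$i * y$i) + d * ((\<Sum>i\<in>UNIV. (if i = j then s * cj else 0)) + (\<Sum>i\<in>UNIV. (if i = k then t * ck else 0)))"
      unfolding pt by (simp add: sum.distrib sum_distrib_left[symmetric])
    also have "\<dots> = 0" using sum0 st(1) by simp
    finally have s0: "(\<Sum>i\<in>UNIV. a$i * (x + d *\<^sub>R dx)$i * (y + d *\<^sub>R dy)$i) = 0" .
    have box: "xl$i \<le> (x + d *\<^sub>R dx)$i \<and> (x + d *\<^sub>R dx)$i \<le> xu$i \<and> yl$i \<le> (y + d *\<^sub>R dy)$i \<and> (y + d *\<^sub>R dy)$i \<le> yu$i" for i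
    proof (cases "i = j")
      case True
      then show ?thesis using Pj(6)[rule_format, OF dsj] unfolding dx_def dy_def by (simp add: mult.assoc)
    next
      case False
      show ?thesis
      proof (cases "i = k")
        case True
        then show ?thesis using False jk Pk(6)[rule_format, OF dtk] unfolding dx_def dy_def by (simp add: mult.assoc)
      next
        case False2: False
        then show ?thesis using False bx bY unfolding dx_def dy_def by auto
      qed
    qed
    show ?thesis using s0 box by (auto simp: S_a_def)
  qed
  have P: "(x + e *\<^sub>R dx, y + e *\<^sub>R dy) \<in> S_a a xl xu yl yu" using mem e by auto
  have Q: "(x + (-e) *\<^sub>R dx, y + (-e) *\<^sub>R dy) \<in> S_a a xl xu yl yu" using mem[of "-e"] e by simp
  have ne: "dx \<noteq> 0 \<or> dy \<noteq> 0"
  proof (cases "s \<noteq> 0")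
    case True
    then have "dx$j \<noteq> 0 \<or> dy$j \<noteq> 0" using Pj(2) unfolding dx_def dy_def by auto
    then show ?thesis by auto
  next
    case False
    then have "t \<noteq> 0" using st by auto
    then have "dx$k \<noteq> 0 \<or> dy$k \<noteq> 0" using Pk(2) jk unfolding dx_def dy_def by auto
    then show ?thesis by auto
  qed
  have neq: "(x + e *\<^sub>R dx, y + e *\<^sub>R dy) \<noteq> (x + (-e) *\<^sub>R dx, y + (-e) *\<^sub>R dy)"
  proof
    assume "(x + e *\<^sub>R dx, y + e *\<^sub>R dy) = (x + (-e) *\<^sub>R dx, y + (-e) *\<^sub>R dy)"
    then have "(2 * e) *\<^sub>R dx = 0" "(2 * e) *\<^sub>R dy = 0" by (auto simp: algebra_simps scaleR_left_distrib[symmetric])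
    then show False using ne e by auto
  qed
  have mid: "midpoint (x + e *\<^sub>R dx, y + e *\<^sub>R dy) (x + (-e) *\<^sub>R dx, y + (-e) *\<^sub>R dy) = (x, y)"
    by (simp add: midpoint_def vec_eq_iff)
  have "(x, y) \<in> open_segment (x + e *\<^sub>R dx, y + e *\<^sub>R dy) (x + (-e) *\<^sub>R dx, y + (-e) *\<^sub>R dy)"
    by (metis midpoint_in_open_segment neq mid)
  then show False using ext P Q by (auto simp: extreme_point_of_def)
qed

theorem corollary2:
  fixes a xl xu yl yu x y :: "real^'n"
  assumes "\<forall>i. a$i \<noteq> 0"
    and "\<forall>i. xl$i < xu$i"
    and "\<forall>i. yl$i < yu$i"
    and "(x, y) extreme_point_of (S_a a xl xu yl yu)"
  shows "(x, y) \<in> D0 a xl xu yl yu \<or> (\<exists>k. (x, y) \<in> Dk a xl xu yl yu k)"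
proof -
  have inS: "(x, y) \<in> S_a a xl xu yl yu" using assms(4) by (simp add: extreme_point_of_def)
  hence sum0: "(\<Sum>i\<in>UNIV. a$i * x$i * y$i) = 0" by (auto simp: S_a_def)
  show ?thesis
  proof (cases "\<forall>i. x$i \<in> {xl$i, xu$i} \<and> y$i \<in> {yl$i, yu$i}")
    case True
    then show ?thesis using inS by (simp add: D0_def)
  next
    case False
    then obtain k where nk: "\<not> (x$k \<in> {xl$k, xu$k} \<and> y$k \<in> {yl$k, yu$k})" by blast
    have oth: "\<forall>i. i \<noteq> k \<longrightarrow> x$i \<in> {xl$i, xu$i} \<and> y$i \<in> {yl$i, yu$i}"
      using two_nonvertex_false[OF assms(4) _ _ nk] by blast
    have "(\<Sum>i\<in>UNIV. a$i * x$i * y$i) = a$k * x$k * y$k + (\<Sum>i\<in>UNIV - {k}. a$i * x$i * y$i)"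
      by (simp add: sum.remove)
    hence "x$k * y$k = - (1 / a$k) * (\<Sum>i\<in>UNIV - {k}. a$i * x$i * y$i)"
      using sum0 assms(1)[rule_format, of k] by (simp add: field_simps)
    then have "(x, y) \<in> Dk a xl xu yl yu k" using inS oth by (simp add: Dk_def)
    then show ?thesis by blast
  qed
qed

end
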